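(* Let $G$ be a bipartite graph, $M$ a matching of $G$, $C$ an $M$-cycle or an $M$-path of $G$, and $x,y$ two vertices of $G - V(C)$ lying in different partite sets of $G$. (1) If $C$ is a cycle and $e_G(\{x,y\}, V(C)) \ge \frac{|C|}{2}+1$, then there is an edge $uv \in E(C)\setminus M$ with $e_G(\{x,y\},\{u,v\}) = 2$. (2) If $C$ is a path and $e_G(\{x,y\}, V(C)) \ge \frac{|C|}{2}+2$, then there is an edge $uv \in E(C)\setminus M$ with $e_G(\{x,y\},\{u,v\}) = 2$.
   Context: Graphs are finite and simple. A cycle $C$ is an $M$-cycle if $|E(C)\cap M|=|C|/2$. An $M$-path is a path whose edges alternate between edges of $M$ and edges not in $M$, beginning and ending with edges of $M$. $|C|$ is the number of vertices; $e_G(S,T)$ is the number of edges between disjoint vertex sets $S$ and $T$. *)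

theory Defs
  imports Complex_Main
begin

definition simple_graph :: "'a set \<Rightarrow> 'a set set \<Rightarrow> bool" where
  "simple_graph V E \<longleftrightarrow> finite V \<and>
     (\<forall>e\<in>E. \<exists>u v. u \<noteq> v \<and> u \<in> V \<and> v \<in> V \<and> e = {u, v})"

definition bipartition :: "'a set \<Rightarrow> 'a set set \<Rightarrow> 'a set \<Rightarrow> 'a set \<Rightarrow> bool" where
  "bipartition V E A B \<longleftrightarrow> A \<union> B = V \<and> A \<inter> B = {} \<and>
     (\<forall>e\<in>E. \<exists>a\<in>A. \<exists>b\<in>B. e = {a, b})"

definition matching :: "'a set set \<Rightarrow> 'a set set \<Rightarrow> bool" where
  "matching E M \<longleftrightarrow> M \<subseteq> E \<and> (\<forall>e1\<in>M. \<forall>e2\<in>M. e1 \<noteq> e2 \<longrightarrow> e1 \<inter> e2 = {})"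

definition path_edges :: "'a list \<Rightarrow> 'a set set" where
  "path_edges vs = {{vs ! i, vs ! Suc i} | i. Suc i < length vs}"

definition cycle_edges :: "'a list \<Rightarrow> 'a set set" where
  "cycle_edges vs = path_edges vs \<union> {{last vs, hd vs}}"

definition is_path :: "'a set \<Rightarrow> 'a set set \<Rightarrow> 'a list \<Rightarrow> bool" where
  "is_path V E vs \<longleftrightarrow> vs \<noteq> [] \<and> distinct vs \<and> set vs \<subseteq> V \<and> path_edges vs \<subseteq> E"

definition is_cycle :: "'a set \<Rightarrow> 'a set set \<Rightarrow> 'a list \<Rightarrow> bool" where
  "is_cycle V E vs \<longleftrightarrow> length vs \<ge> 3 \<and> distinct vs \<and> set vs \<subseteq> V \<and> cycle_edges vs \<subseteq> E"

definition M_cycle :: "'a set \<Rightarrow> 'a set set \<Rightarrow> 'a set set \<Rightarrow> 'a list \<Rightarrow> bool" where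
  "M_cycle V E M vs \<longleftrightarrow> is_cycle V E vs \<and> 2 * card (cycle_edges vs \<inter> M) = length vs"

text \<open>M-path: edges alternate between M and non-M, first and last edge in M.\<close>
definition M_path :: "'a set \<Rightarrow> 'a set set \<Rightarrow> 'a set set \<Rightarrow> 'a list \<Rightarrow> bool" where
  "M_path V E M vs \<longleftrightarrow> is_path V E vs \<and> length vs \<ge> 2 \<and> even (length vs) \<and>
     (\<forall>i. Suc i < length vs \<longrightarrow> ({vs ! i, vs ! Suc i} \<in> M \<longleftrightarrow> even i))"

definition edges_between :: "'a set set \<Rightarrow> 'a set \<Rightarrow> 'a set \<Rightarrow> nat" where
  "edges_between E S T = card {e \<in> E. \<exists>s\<in>S. \<exists>t\<in>T. e = {s, t}}"

end

theory Submission
  imports Defs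
begin

lemma card_two_le1:
  assumes "\<not> (a \<in> N \<and> b \<in> N)"
  shows "card ({a, b} \<inter> N) \<le> 1"
proof (cases "a \<in> N")
  case True
  then have "{a, b} \<inter> N = {a}" using assms by auto
  then show ?thesis by simp
next
  case False
  then have "{a, b} \<inter> N \<subseteq> {b}" by auto
  then have "card ({a, b} \<inter> N) \<le> card {b}" by (intro card_mono) auto
  then show ?thesis by simp
qed

lemma eb_card:
  assumes bip: "bipartition V E A B"
    and xy: "(x \<in> A \<and> y \<in> B) \<or> (x \<in> B \<and> y \<in> A)"
    and S: "finite S" "x \<notin> S" "y \<notin> S"
  shows "edges_between E {x, y} S = card (S \<inter> {w. {x,w} \<in> E \<or> {y,w} \<in> E})"
proof -
  define N where "N = {w. {x,w} \<in> E \<or> {y,w} \<in> E}"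
  define g where "g w = (if {x,w} \<in> E then {x,w} else {y,w})" for w
  from bip have AB: "A \<inter> B = {}" and ed: "\<forall>e\<in>E. \<exists>a\<in>A. \<exists>b\<in>B. e = {a, b}"
    by (auto simp: bipartition_def)
  have nb: "\<not> ({x,w} \<in> E \<and> {y,w} \<in> E)" for w
  proof
    assume h: "{x,w} \<in> E \<and> {y,w} \<in> E"
    from h ed obtain a1 b1 where 1: "a1\<in>A" "b1\<in>B" "{x,w} = {a1,b1}" by blast
    from h ed obtain a2 b2 where 2: "a2\<in>A" "b2\<in>B" "{y,w} = {a2,b2}" by blast
    from 1 2 xy AB show False by (auto simp: doubleton_eq_iff)
  qed
  have inj: "inj_on g (S \<inter> N)"
    using S unfolding inj_on_def g_def by (auto simp: doubleton_eq_iff)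
  have eq: "{e \<in> E. \<exists>s\<in>{x,y}. \<exists>t\<in>S. e = {s, t}} = g ` (S \<inter> N)"
  proof
    show "g ` (S \<inter> N) \<subseteq> {e \<in> E. \<exists>s\<in>{x,y}. \<exists>t\<in>S. e = {s, t}}"
      unfolding N_def g_def by auto
    show "{e \<in> E. \<exists>s\<in>{x,y}. \<exists>t\<in>S. e = {s, t}} \<subseteq> g ` (S \<inter> N)"
    proof
      fix e assume "e \<in> {e \<in> E. \<exists>s\<in>{x,y}. \<exists>t\<in>S. e = {s, t}}"
      then obtain s t where st: "e \<in> E" "s \<in> {x,y}" "t \<in> S" "e = {s,t}" by blast
      then have "t \<in> S \<inter> N" unfolding N_def by auto
      moreover have "g t = e"
      proof (cases "s = x")
        case True then show ?thesis using st unfolding g_def by simp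
      next
        case False then have "s = y" using st by simp
        then show ?thesis using st nb[of t] unfolding g_def by simp
      qed
      ultimately show "e \<in> g ` (S \<inter> N)" by blast
    qed
  qed
  show ?thesis using eq card_image[OF inj] N_def by (simp add: edges_between_def)
qed

lemma cycle_part:
  assumes mat: "matching E M" and cyc: "M_cycle V E M C"
    and big: "card (set C \<inter> N) > length C div 2"
  shows "\<exists>u v. {u,v} \<in> cycle_edges C - M \<and> u \<in> N \<and> v \<in> N \<and> u \<noteq> v \<and> u \<in> set C \<and> v \<in> set C"
proof (rule ccontr)
  assume nex: "\<not> ?thesis"
  define n where "n = length C"
  have n3: "n \<ge> 3" and dist: "distinct C" and cnt: "2 * card (cycle_edges C \<inter> M) = n"
    using cyc by (auto simp: M_cycle_def is_cycle_def n_def)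
  define e where "e i = {C!i, C!(Suc i mod n)}" for i
  have ce: "cycle_edges C = e ` {..<n}"
  proof
    show "cycle_edges C \<subseteq> e ` {..<n}"
    proof
      fix f assume "f \<in> cycle_edges C"
      then consider (p) i where "Suc i < n" "f = {C!i, C!Suc i}" | (l) "f = {last C, hd C}"
        unfolding cycle_edges_def path_edges_def n_def by blast
      then show "f \<in> e ` {..<n}"
      proof cases
        case p then show ?thesis unfolding e_def
          by (metis (no_types, lifting) Suc_lessD image_eqI lessThan_iff mod_less)
      next
        case l
        have "C \<noteq> []" using n3 n_def by auto
        then have "f = e (n - 1)" using l n3 unfolding e_def n_def
          by (simp add: last_conv_nth hd_conv_nth insert_commute)
        then show ?thesis using n3 by auto
      qed
    qed
    show "e ` {..<n} \<subseteq> cycle_edges C"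
    proof
      fix f assume "f \<in> e ` {..<n}"
      then obtain i where i: "i < n" "f = e i" by auto
      show "f \<in> cycle_edges C"
      proof (cases "Suc i < n")
        case True
        then show ?thesis using i unfolding cycle_edges_def path_edges_def e_def n_def by auto
      next
        case False
        then have "i = n - 1" using i by auto
        moreover have "C \<noteq> []" using n3 n_def by auto
        ultimately have "f = {last C, hd C}" using i n3 unfolding e_def n_def
          by (simp add: last_conv_nth hd_conv_nth insert_commute)
        then show ?thesis unfolding cycle_edges_def by auto
      qed
    qed
  qed
  define Q where "Q = {i. i < n \<and> e i \<in> M}"
  define P where "P = {i. i < n \<and> e i \<notin> M}"
  have "cycle_edges C \<inter> M \<subseteq> e ` Q" by (auto simp: ce Q_def)
  then have "card (cycle_edges C \<inter> M) \<le> card (e ` Q)"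
    by (intro card_mono) (auto simp: Q_def)
  also have "\<dots> \<le> card Q" by (rule card_image_le) (auto simp: Q_def)
  finally have cQ: "2 * card Q \<ge> n" using cnt by linarith
  have "P \<union> Q = {..<n}" "P \<inter> Q = {}" by (auto simp: P_def Q_def)
  then have "card P + card Q = n"
    by (metis card_Un_disjoint card_lessThan finite_Un finite_lessThan)
  then have cP: "card P \<le> n div 2" using cQ by linarith
  have cover: "set C \<subseteq> (\<Union>i\<in>P. e i)"
  proof
    fix v assume "v \<in> set C"
    then obtain k where k: "k < n" "v = C!k" by (auto simp: in_set_conv_nth n_def)
    define p where "p = (if k = 0 then n - 1 else k - 1)"
    have pn: "p < n" and sp: "Suc p mod n = k" using k n3 by (auto simp: p_def)
    have pk: "p \<noteq> k" using n3 k by (auto simp: p_def)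
    have nep: "e p \<noteq> e k"
    proof
      assume h: "e p = e k"
      have "C!p \<noteq> C!k" using pk pn k dist n_def by (simp add: nth_eq_iff_index_eq)
      then have "C!p = C!(Suc k mod n)" using h sp unfolding e_def by (auto simp: doubleton_eq_iff)
      moreover have "Suc k mod n < n" using n3 by simp
      ultimately have "p = Suc k mod n" using pn dist n_def by (simp add: nth_eq_iff_index_eq)
      moreover have "Suc k mod n = (if Suc k < n then Suc k else 0)"
      proof (cases "Suc k < n")
        case False
        then have "Suc k = n" using k by simp
        then show ?thesis using False by simp
      qed simp
      ultimately show False using n3 k unfolding p_def
        by (cases "k = 0"; cases "Suc k < n") auto
    qed
    have "\<not> (e p \<in> M \<and> e k \<in> M)"
    proof
      assume "e p \<in> M \<and> e k \<in> M"
      then have "e p \<inter> e k = {}" using mat nep by (auto simp: matching_def)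
      moreover have "C!k \<in> e p" "C!k \<in> e k" using sp by (auto simp: e_def)
      ultimately show False by blast
    qed
    then have "p \<in> P \<or> k \<in> P" using pn k by (auto simp: P_def)
    moreover have "v \<in> e p" "v \<in> e k" using sp k by (auto simp: e_def)
    ultimately show "v \<in> (\<Union>i\<in>P. e i)" by blast
  qed
  have le1: "card (e i \<inter> N) \<le> 1" if "i \<in> P" for i
  proof -
    have "i < n" "e i \<notin> M" using that by (auto simp: P_def)
    have "i \<noteq> Suc i mod n" using n3 \<open>i < n\<close>
    proof (cases "Suc i < n")
      case False
      then have "Suc i = n" using \<open>i < n\<close> by simp
      then show ?thesis using n3 by auto
    qed simp
    moreover have "Suc i mod n < n" using n3 by simp
    ultimately have ne: "C!i \<noteq> C!(Suc i mod n)" using dist \<open>i < n\<close> n_def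
      by (simp add: nth_eq_iff_index_eq)
    have ein: "e i \<in> cycle_edges C" using ce \<open>i < n\<close> by auto
    have "C!i \<in> set C" "C!(Suc i mod n) \<in> set C" using \<open>i < n\<close> \<open>Suc i mod n < n\<close> n_def by auto
    then have "\<not> (C!i \<in> N \<and> C!(Suc i mod n) \<in> N)"
      using nex ne ein \<open>e i \<notin> M\<close> unfolding e_def by blast
    then show ?thesis unfolding e_def by (rule card_two_le1)
  qed
  have "card (set C \<inter> N) \<le> card (\<Union>i\<in>P. e i \<inter> N)"
    using cover by (intro card_mono) (auto simp: P_def e_def)
  also have "\<dots> \<le> (\<Sum>i\<in>P. card (e i \<inter> N))"
    by (rule card_UN_le) (auto simp: P_def)
  also have "\<dots> \<le> (\<Sum>i\<in>P. 1)" using le1 by (intro sum_mono) auto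
  also have "\<dots> = card P" by simp
  finally show False using cP big n_def by linarith
qed

lemma path_part:
  assumes pth: "M_path V E M C"
    and big: "card (set C \<inter> N) > length C div 2 + 1"
  shows "\<exists>u v. {u,v} \<in> path_edges C - M \<and> u \<in> N \<and> v \<in> N \<and> u \<noteq> v \<and> u \<in> set C \<and> v \<in> set C"
proof (rule ccontr)
  assume nex: "\<not> ?thesis"
  define n where "n = length C"
  have n2: "n \<ge> 2" and ev: "even n" and dist: "distinct C"
    and alt: "\<And>i. Suc i < n \<Longrightarrow> ({C!i, C!Suc i} \<in> M \<longleftrightarrow> even i)"
    using pth by (auto simp: M_path_def is_path_def n_def)
  define e where "e i = {C!i, C!Suc i}" for i
  define P where "P = {i. odd i \<and> Suc i < n}"
  have cover: "set C \<subseteq> {C!0, C!(n-1)} \<union> (\<Union>i\<in>P. e i)"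
  proof
    fix v assume "v \<in> set C"
    then obtain k where k: "k < n" "v = C!k" by (auto simp: in_set_conv_nth n_def)
    show "v \<in> {C!0, C!(n-1)} \<union> (\<Union>i\<in>P. e i)"
    proof (cases "k = 0 \<or> k = n - 1")
      case True then show ?thesis using k by auto
    next
      case False
      show ?thesis
      proof (cases "odd k")
        case True
        then have "k \<in> P" using False k by (auto simp: P_def)
        then show ?thesis using k by (auto simp: e_def)
      next
        case False2: False
        then have "k - 1 \<in> P" using False k by (auto simp: P_def)
        moreover have "v \<in> e (k - 1)" using False k by (auto simp: e_def)
        ultimately show ?thesis by blast
      qed
    qed
  qed
  have "P \<subseteq> (\<lambda>j. 2*j+1) ` {..<(n-2) div 2}"
  proof
    fix i assume "i \<in> P"
    then have i: "odd i" "Suc i < n" by (auto simp: P_def)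
    then have "i = 2 * (i div 2) + 1" by presburger
    moreover have "i div 2 < (n-2) div 2" using i ev by presburger
    ultimately show "i \<in> (\<lambda>j. 2*j+1) ` {..<(n-2) div 2}" by blast
  qed
  then have "card P \<le> card ((\<lambda>j. 2*j+1) ` {..<(n-2) div 2})" by (intro card_mono) auto
  also have "\<dots> \<le> (n-2) div 2" using card_image_le[of "{..<(n-2) div 2}" "\<lambda>j. 2*j+1"] by simp
  finally have cP: "card P \<le> (n-2) div 2" .
  have finP: "finite P" by (rule finite_subset[of _ "{..<n}"]) (auto simp: P_def)
  have le1: "card (e i \<inter> N) \<le> 1" if "i \<in> P" for i
  proof -
    have i: "odd i" "Suc i < n" using that by (auto simp: P_def)
    then have notM: "e i \<notin> M" using alt[of i] by (simp add: e_def)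
    have ne: "C!i \<noteq> C!Suc i" using dist i n_def by (simp add: nth_eq_iff_index_eq)
    have ein: "e i \<in> path_edges C" using i unfolding path_edges_def e_def n_def by blast
    have "C!i \<in> set C" "C!Suc i \<in> set C" using i n_def by auto
    then have "\<not> (C!i \<in> N \<and> C!Suc i \<in> N)"
      using nex ne ein notM unfolding e_def by blast
    then show ?thesis unfolding e_def by (rule card_two_le1)
  qed
  have "set C \<inter> N \<subseteq> ({C!0, C!(n-1)} \<inter> N) \<union> (\<Union>i\<in>P. e i \<inter> N)" using cover by blast
  then have "card (set C \<inter> N) \<le> card (({C!0, C!(n-1)} \<inter> N) \<union> (\<Union>i\<in>P. e i \<inter> N))"
    using finP by (intro card_mono) (auto simp: e_def)
  also have "\<dots> \<le> card ({C!0, C!(n-1)} \<inter> N) + card (\<Union>i\<in>P. e i \<inter> N)"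
    by (rule card_Un_le)
  also have "card ({C!0, C!(n-1)} \<inter> N) \<le> 2"
  proof -
    have "card ({C!0, C!(n-1)} \<inter> N) \<le> card {C!0, C!(n-1)}" by (intro card_mono) auto
    also have "\<dots> \<le> 2" by (rule card_insert_le_m1) auto
    finally show ?thesis .
  qed
  also have "card (\<Union>i\<in>P. e i \<inter> N) \<le> (\<Sum>i\<in>P. card (e i \<inter> N))"
    using finP by (rule card_UN_le)
  also have "\<dots> \<le> (\<Sum>i\<in>P. 1)" using le1 by (intro sum_mono) auto
  also have "\<dots> = card P" by simp
  finally show False using cP big n_def n2 ev by linarith
qed

theorem lemma3:
  fixes V :: "'a set" and E M :: "'a set set" and A B :: "'a set"
    and C :: "'a list" and x y :: 'a
  assumes "simple_graph V E"
    and "bipartition V E A B"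
    and "matching E M"
    and "M_cycle V E M C \<or> M_path V E M C"
    and "x \<in> V - set C" and "y \<in> V - set C"
    and "(x \<in> A \<and> y \<in> B) \<or> (x \<in> B \<and> y \<in> A)"
  shows "(M_cycle V E M C \<and> real (edges_between E {x, y} (set C)) \<ge> real (length C) / 2 + 1
            \<longrightarrow> (\<exists>u v. {u, v} \<in> cycle_edges C - M \<and> edges_between E {x, y} {u, v} = 2))
       \<and> (M_path V E M C \<and> real (edges_between E {x, y} (set C)) \<ge> real (length C) / 2 + 2
            \<longrightarrow> (\<exists>u v. {u, v} \<in> path_edges C - M \<and> edges_between E {x, y} {u, v} = 2))"
proof -
  define N where "N = {w. {x,w} \<in> E \<or> {y,w} \<in> E}"
  have ebC: "edges_between E {x, y} (set C) = card (set C \<inter> N)"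
    unfolding N_def using assms by (intro eb_card) auto
  have eb2: "edges_between E {x, y} {u, v} = 2"
    if "u \<in> N" "v \<in> N" "u \<noteq> v" "u \<in> set C" "v \<in> set C" for u v
  proof -
    have "edges_between E {x, y} {u, v} = card ({u, v} \<inter> N)"
      unfolding N_def using assms that by (intro eb_card) auto
    also have "{u, v} \<inter> N = {u, v}" using that by auto
    finally show ?thesis using that by simp
  qed
  have hd: "real (length C div 2) \<le> real (length C) / 2"
  proof -
    have "2 * (length C div 2) \<le> length C" by simp
    then have "real (2 * (length C div 2)) \<le> real (length C)" by linarith
    then show ?thesis by simp
  qed
  show ?thesis
  proof (intro conjI impI)
    assume h: "M_cycle V E M C \<and> real (edges_between E {x, y} (set C)) \<ge> real (length C) / 2 + 1"
    then have "card (set C \<inter> N) > length C div 2" using ebC hd by linarith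
    then obtain u v where "{u,v} \<in> cycle_edges C - M" "u \<in> N" "v \<in> N" "u \<noteq> v" "u \<in> set C" "v \<in> set C"
      using cycle_part[OF assms(3)] h by blast
    then show "\<exists>u v. {u, v} \<in> cycle_edges C - M \<and> edges_between E {x, y} {u, v} = 2"
      using eb2 by blast
  next
    assume h: "M_path V E M C \<and> real (edges_between E {x, y} (set C)) \<ge> real (length C) / 2 + 2"
    then have "card (set C \<inter> N) > length C div 2 + 1" using ebC hd by linarith
    then obtain u v where "{u,v} \<in> path_edges C - M" "u \<in> N" "v \<in> N" "u \<noteq> v" "u \<in> set C" "v \<in> set C"
      using path_part h by blast
    then show "\<exists>u v. {u, v} \<in> path_edges C - M \<and> edges_between E {x, y} {u, v} = 2"
      using eb2 by blast
  qed
qed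

end
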